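(* Let $G$ be a graph and $\ell\ge 2$. Then $\overline{G\cup K_1}$ is $N$-AW if and only if $G$ is $A$-AW.
   Context: All graphs are finite and simple; $\overline{H}$ is the complement of $H$ and $G\cup K_1$ is the disjoint union of $G$ with a single new vertex. Labels lie in $\mathbb{Z}_\ell$. In the neighborhood Lights Out game, toggling a vertex $v$ adds $1$ (mod $\ell$) to the label of every vertex of the closed neighborhood $N[v]$; in the adjacency Lights Out game, toggling $v$ adds $1$ to the label of every vertex of the open neighborhood $N(v)$ (and not to $v$ itself). A game is won when all labels are $0$. A graph is $N$-AW (resp. $A$-AW) if the neighborhood (resp. adjacency) game can be won from every initial labeling $V\to\mathbb{Z}_\ell$; equivalently $A+I$ (resp. the adjacency matrix $A$) is invertible over $\mathbb{Z}_\ell$. *)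

theory Defs
  imports "HOL-Number_Theory.Cong"
begin

definition simple_graph :: "'a set \<Rightarrow> ('a \<Rightarrow> 'a \<Rightarrow> bool) \<Rightarrow> bool" where
  "simple_graph V E \<longleftrightarrow> finite V \<and> (\<forall>u v. E u v \<longrightarrow> u \<in> V \<and> v \<in> V)
     \<and> (\<forall>u v. E u v \<longrightarrow> E v u) \<and> (\<forall>u. \<not> E u u)"

definition graph_compl :: "'a set \<Rightarrow> ('a \<Rightarrow> 'a \<Rightarrow> bool) \<Rightarrow> 'a set \<times> ('a \<Rightarrow> 'a \<Rightarrow> bool)" where
  "graph_compl V E = (V, \<lambda>u v. u \<in> V \<and> v \<in> V \<and> u \<noteq> v \<and> \<not> E u v)"

definition union_K1 :: "'a set \<Rightarrow> ('a \<Rightarrow> 'a \<Rightarrow> bool) \<Rightarrow> 'a option set \<times> ('a option \<Rightarrow> 'a option \<Rightarrow> bool)" where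
  "union_K1 V E = (insert None (Some ` V),
     \<lambda>x y. case (x, y) of (Some u, Some v) \<Rightarrow> E u v | _ \<Rightarrow> False)"

text \<open>Neighborhood Lights Out over Z_l: from every initial labeling b, there are toggle
  counts x (toggling v exactly x v times) making every label 0 mod l. Toggling v adds 1 to
  every vertex of N[v], so vertex u receives the toggles of all v in N[u].\<close>
definition N_AW :: "'a set \<Rightarrow> ('a \<Rightarrow> 'a \<Rightarrow> bool) \<Rightarrow> nat \<Rightarrow> bool" where
  "N_AW V E l \<longleftrightarrow> (\<forall>b :: 'a \<Rightarrow> int. \<exists>x :: 'a \<Rightarrow> nat. \<forall>u\<in>V.
     [b u + (\<Sum>v\<in>V. if v = u \<or> E v u then int (x v) else 0) = 0] (mod int l))"

text \<open>Adjacency Lights Out: toggling v adds 1 to every vertex of N(v).\<close>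
definition A_AW :: "'a set \<Rightarrow> ('a \<Rightarrow> 'a \<Rightarrow> bool) \<Rightarrow> nat \<Rightarrow> bool" where
  "A_AW V E l \<longleftrightarrow> (\<forall>b :: 'a \<Rightarrow> int. \<exists>x :: 'a \<Rightarrow> nat. \<forall>u\<in>V.
     [b u + (\<Sum>v\<in>V. if E v u then int (x v) else 0) = 0] (mod int l))"

end

theory Submission
  imports Defs
begin

lemma sum_opt:
  assumes "finite V"
  shows "(\<Sum>w\<in>insert None (Some ` V). f w) = f None + (\<Sum>v\<in>V. f (Some v))"
  using assms by (simp add: sum.reindex)

theorem theorem2p6:
  fixes V :: "'a set" and E :: "'a \<Rightarrow> 'a \<Rightarrow> bool" and l :: nat
  assumes "simple_graph V E" and "l \<ge> 2"
  shows "N_AW (fst (graph_compl (fst (union_K1 V E)) (snd (union_K1 V E))))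
              (snd (graph_compl (fst (union_K1 V E)) (snd (union_K1 V E)))) l
         \<longleftrightarrow> A_AW V E l"
proof -
  have fin: "finite V" and irr: "\<And>u. \<not> E u u" and inV: "\<And>u v. E u v \<Longrightarrow> u \<in> V \<and> v \<in> V"
    using assms(1) unfolding simple_graph_def by auto
  define W where "W = insert None (Some ` V)"
  define E' where "E' = (\<lambda>x y. x \<in> W \<and> y \<in> W \<and> x \<noteq> y \<and>
       \<not> (case (x, y) of (Some u, Some v) \<Rightarrow> E u v | _ \<Rightarrow> False))"
  have gc: "graph_compl (fst (union_K1 V E)) (snd (union_K1 V E)) = (W, E')"
    unfolding graph_compl_def union_K1_def W_def E'_def by simp
  have eqN: "(\<Sum>w\<in>W. if w = None \<or> E' w None then int (x w) else 0)
        = int (x None) + (\<Sum>v\<in>V. int (x (Some v)))" for x :: "'a option \<Rightarrow> nat"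
    unfolding W_def sum_opt[OF fin] by (simp add: E'_def W_def)
  have eqS: "(\<Sum>w\<in>W. if w = Some u \<or> E' w (Some u) then int (x w) else 0)
        = int (x None) + (\<Sum>v\<in>V. int (x (Some v))) - (\<Sum>v\<in>V. if E v u then int (x (Some v)) else 0)"
    if u: "u \<in> V" for x :: "'a option \<Rightarrow> nat" and u
  proof -
    have "(\<Sum>w\<in>W. if w = Some u \<or> E' w (Some u) then int (x w) else 0)
       = int (x None) + (\<Sum>v\<in>V. if Some v = Some u \<or> E' (Some v) (Some u) then int (x (Some v)) else 0)"
      unfolding W_def sum_opt[OF fin] using u by (simp add: E'_def W_def)
    also have "(\<Sum>v\<in>V. if Some v = Some u \<or> E' (Some v) (Some u) then int (x (Some v)) else 0)
       = (\<Sum>v\<in>V. int (x (Some v)) - (if E v u then int (x (Some v)) else 0))"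
      apply (rule sum.cong, simp)
      using u irr by (auto simp: E'_def W_def)
    also have "\<dots> = (\<Sum>v\<in>V. int (x (Some v))) - (\<Sum>v\<in>V. if E v u then int (x (Some v)) else 0)"
      by (simp add: sum_subtractf)
    finally show ?thesis by simp
  qed
  have lpos: "int l > 0" using assms(2) by simp
  show ?thesis
    unfolding gc fst_conv snd_conv
  proof
    assume N: "N_AW W E' l"
    show "A_AW V E l"
      unfolding A_AW_def
    proof
      fix b :: "'a \<Rightarrow> int"
      define b' where "b' = (\<lambda>w. case w of None \<Rightarrow> 0 | Some u \<Rightarrow> - b u)"
      obtain x where x: "\<forall>u\<in>W. [b' u + (\<Sum>v\<in>W. if v = u \<or> E' v u then int (x v) else 0) = 0] (mod int l)"
        using N unfolding N_AW_def by blast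
      have x0: "[int (x None) + (\<Sum>v\<in>V. int (x (Some v))) = 0] (mod int l)"
        using x[rule_format, of None] eqN[of x] unfolding W_def by (simp add: b'_def)
      show "\<exists>y :: 'a \<Rightarrow> nat. \<forall>u\<in>V. [b u + (\<Sum>v\<in>V. if E v u then int (y v) else 0) = 0] (mod int l)"
      proof (intro exI[of _ "\<lambda>v. x (Some v)"] ballI)
        fix u assume u: "u \<in> V"
        have "[- b u + (int (x None) + (\<Sum>v\<in>V. int (x (Some v))) - (\<Sum>v\<in>V. if E v u then int (x (Some v)) else 0)) = 0] (mod int l)"
          using x[rule_format, of "Some u"] u eqS[OF u, of x] unfolding W_def by (simp add: b'_def)
        then have d1: "int l dvd - b u + (int (x None) + (\<Sum>v\<in>V. int (x (Some v))) - (\<Sum>v\<in>V. if E v u then int (x (Some v)) else 0))"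
          unfolding cong_0_iff .
        have d2: "int l dvd int (x None) + (\<Sum>v\<in>V. int (x (Some v)))" using x0 unfolding cong_0_iff .
        have eq: "b u + (\<Sum>v\<in>V. if E v u then int (x (Some v)) else 0) = (int (x None) + (\<Sum>v\<in>V. int (x (Some v)))) - (- b u + (int (x None) + (\<Sum>v\<in>V. int (x (Some v))) - (\<Sum>v\<in>V. if E v u then int (x (Some v)) else 0)))"
          by simp
        have "int l dvd b u + (\<Sum>v\<in>V. if E v u then int (x (Some v)) else 0)"
          unfolding eq by (rule dvd_diff[OF d2 d1])
        then show "[b u + (\<Sum>v\<in>V. if E v u then int (x (Some v)) else 0) = 0] (mod int l)"
          unfolding cong_0_iff .
      qed
    qed
  next
    assume A: "A_AW V E l"
    show "N_AW W E' l"
      unfolding N_AW_def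
    proof
      fix b :: "'a option \<Rightarrow> int"
      define c where "c = b None"
      obtain y where y: "\<forall>u\<in>V. [(c - b (Some u)) + (\<Sum>v\<in>V. if E v u then int (y v) else 0) = 0] (mod int l)"
        using A unfolding A_AW_def by (erule_tac x="\<lambda>u. c - b (Some u)" in allE) blast
      define S where "S = (\<Sum>v\<in>V. int (y v))"
      define x where "x = (\<lambda>w. case w of None \<Rightarrow> nat ((- c - S) mod int l) | Some v \<Rightarrow> y v)"
      have xs: "\<And>v. x (Some v) = y v" by (simp add: x_def)
      have x0: "int (x None) = (- c - S) mod int l" using lpos by (simp add: x_def)
      have xS: "(\<Sum>v\<in>V. int (x (Some v))) = S" by (simp add: x_def S_def)
      have key: "int l dvd c + int (x None) + S"
      proof -
        have "[int (x None) = - c - S] (mod int l)" unfolding x0 cong_def by simp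
        then have "int l dvd int (x None) - (- c - S)" unfolding cong_iff_dvd_diff .
        moreover have "int (x None) - (- c - S) = c + int (x None) + S" by simp
        ultimately show ?thesis by simp
      qed
      show "\<exists>x :: 'a option \<Rightarrow> nat. \<forall>u\<in>W. [b u + (\<Sum>v\<in>W. if v = u \<or> E' v u then int (x v) else 0) = 0] (mod int l)"
      proof (intro exI[of _ x] ballI)
        fix w assume "w \<in> W"
        then consider "w = None" | u where "w = Some u" "u \<in> V" unfolding W_def by auto
        then show "[b w + (\<Sum>v\<in>W. if v = w \<or> E' v w then int (x v) else 0) = 0] (mod int l)"
        proof cases
          case 1
          then show ?thesis using key unfolding cong_0_iff by (simp add: eqN xS c_def add.assoc)
        next
          case (2 u)
          have yu: "int l dvd (c - b (Some u)) + (\<Sum>v\<in>V. if E v u then int (y v) else 0)"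
            using y 2(2) unfolding cong_0_iff by blast
          have eq: "b (Some u) + (int (x None) + S - (\<Sum>v\<in>V. if E v u then int (y v) else 0))
              = (c + int (x None) + S) - ((c - b (Some u)) + (\<Sum>v\<in>V. if E v u then int (y v) else 0))"
            by simp
          have "int l dvd b (Some u) + (int (x None) + S - (\<Sum>v\<in>V. if E v u then int (y v) else 0))"
            unfolding eq by (rule dvd_diff[OF key yu])
          moreover have "(\<Sum>v\<in>W. if v = w \<or> E' v w then int (x v) else 0)
              = int (x None) + S - (\<Sum>v\<in>V. if E v u then int (y v) else 0)"
            unfolding 2(1) eqS[OF 2(2), of x] xS using xs[of u] apply simp
            using [[show_types, show_sorts]] apply (rule sum.cong) apply simp
            by (simp add: xs)
          ultimately show ?thesis unfolding cong_0_iff 2(1) by simp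
        qed
      qed
    qed
  qed
qed

end
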